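(* Suppose the joint density of the type satisfies $g(v,k)=g_v(v)g_k(k)$ for all $(v,k)$, and let $p^*$ be any maximizer of $p\,(1-G_v(p))$ over $p\in[0,1]$. Then the mechanism $(f,p)$ with $(f(v,k),p(v,k))=(k,1,p^* )$ if $v\ge p^*$ and $(f(v,k),p(v,k))=(0,0,0)$ otherwise is optimal, i.e., it is incentive compatible and individually rational and its expected revenue $\int_{V\times K}p\,dG$ is at least that of every other incentive compatible and individually rational mechanism.
   Context: A seller has one unit each of two divisible goods. An agent has private type $(v,k)\in V\times K$, $V=[0,1]$, $K=(0,1]$, and from an outcome $(a_1,a_2,t)$ with $a_1,a_2\in[0,1]$ (quantities of good 1 and good 2) and $t\in\mathbb{R}$ (payment by the agent) gets utility $U_{(v,k)}(a_1,a_2,t)=v\min\{a_1/k,a_2\}-t$. A mechanism is a pair $(f,p)$ with $f=(f_1,f_2):V\times K\to[0,1]^2$, $p:V\times K\to\mathbb{R}$. It is incentive compatible if $U_{(v,k)}(f(v,k),p(v,k))\ge U_{(v,k)}(f(v',k'),p(v',k'))$ for all types $(v,k),(v',k')$, and individually rational if $U_{(v,k)}(f(v,k),p(v,k))\ge0$ for all $(v,k)$. The type is distributed according to a joint distribution $G$ with strictly positive density $g$; $g_v,g_k$ are the marginal densities of $v$ and $k$, and $G_v$ is the marginal distribution function of $v$. *)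

theory Defs
  imports "HOL-Analysis.Analysis"
begin

definition types :: "(real \<times> real) set" where
  "types = {0..1} \<times> {0<..1}"

definition util :: "real \<Rightarrow> real \<Rightarrow> real \<Rightarrow> real \<Rightarrow> real \<Rightarrow> real" where
  "util v k a1 a2 t = v * min (a1 / k) a2 - t"

definition feasible :: "(real \<times> real \<Rightarrow> real \<times> real) \<Rightarrow> bool" where
  "feasible f \<longleftrightarrow> (\<forall>x\<in>types. f x \<in> {0..1} \<times> {0..1})"

definition IC :: "(real \<times> real \<Rightarrow> real \<times> real) \<Rightarrow> (real \<times> real \<Rightarrow> real) \<Rightarrow> bool" where
  "IC f p \<longleftrightarrow> (\<forall>(v,k)\<in>types. \<forall>(v',k')\<in>types.
      util v k (fst (f (v,k))) (snd (f (v,k))) (p (v,k))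
        \<ge> util v k (fst (f (v',k'))) (snd (f (v',k'))) (p (v',k')))"

definition IR :: "(real \<times> real \<Rightarrow> real \<times> real) \<Rightarrow> (real \<times> real \<Rightarrow> real) \<Rightarrow> bool" where
  "IR f p \<longleftrightarrow> (\<forall>(v,k)\<in>types. util v k (fst (f (v,k))) (snd (f (v,k))) (p (v,k)) \<ge> 0)"

definition marg_v :: "(real \<times> real \<Rightarrow> real) \<Rightarrow> real \<Rightarrow> real" where
  "marg_v g v = (LINT k:{0<..1}|lborel. g (v,k))"

definition marg_k :: "(real \<times> real \<Rightarrow> real) \<Rightarrow> real \<Rightarrow> real" where
  "marg_k g k = (LINT v:{0..1}|lborel. g (v,k))"

definition cdf_v :: "(real \<times> real \<Rightarrow> real) \<Rightarrow> real \<Rightarrow> real" where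
  "cdf_v g q = (LINT v:{0..q}|lborel. marg_v g v)"

definition revenue :: "(real \<times> real \<Rightarrow> real) \<Rightarrow> (real \<times> real \<Rightarrow> real) \<Rightarrow> real" where
  "revenue g p = (LINT x:types|lborel. p x * g x)"

end

theory Submission
  imports Defs
begin

lemma chain:
  fixes D q :: "real \<Rightarrow> real" and v :: real
  assumes qb: "\<forall>a\<in>{0..1}. 0 \<le> q a \<and> q a \<le> 1"
    and inc: "\<forall>a\<in>{0..1}. \<forall>b\<in>{0..1}. a \<le> b \<longrightarrow> D b - D a \<le> (b - a) * (q b - q a)"
    and v: "v \<in> {0..1}"
  shows "D v \<le> D 0"
proof -
  have step: "D v \<le> D 0 + 1 / real m" if m: "m \<ge> 1" for m :: nat
  proof -
    have mpos: "real m > 0" using m by simp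
    have "D (real i * v / m) \<le> D 0 + v / m * (q (real i * v / m) - q 0)" if "i \<le> m" for i
      using that
    proof (induction i)
      case 0
      then show ?case by simp
    next
      case (Suc i)
      define a where "a = real i * v / m"
      define b where "b = real (Suc i) * v / m"
      have a0: "0 \<le> a" using v mpos by (simp add: a_def)
      have "real i * v \<le> real m * 1" using Suc.prems v by (intro mult_mono) auto
      then have a1: "a \<le> 1" using mpos by (simp add: a_def field_simps)
      have "real (Suc i) * v \<le> real m * 1" using Suc.prems v by (intro mult_mono) auto
      then have b1: "b \<le> 1" using mpos by (simp add: b_def field_simps)
      have ab: "b - a = v / m" using mpos by (simp add: a_def b_def field_simps)
      have "0 \<le> v / m" using v mpos by simp
      then have b0: "a \<le> b" using ab by simp
      have "D b - D a \<le> (b - a) * (q b - q a)" using inc a0 a1 b1 b0 by auto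
      moreover have "D a \<le> D 0 + v / m * (q a - q 0)" using Suc by (simp add: a_def)
      ultimately have "D b \<le> D 0 + v / m * (q b - q 0)" using ab by (simp add: algebra_simps)
      then show ?case by (simp add: b_def)
    qed
    from this[of m] have "D v \<le> D 0 + v / m * (q v - q 0)" using mpos by simp
    moreover have "v / m * (q v - q 0) \<le> 1 / m"
    proof -
      have "v * (q v - q 0) \<le> 1"
      proof (cases "q v - q 0 \<ge> 0")
        case True
        have "q v \<le> 1" "0 \<le> q 0" using qb v by auto
        then have "v * (q v - q 0) \<le> 1 * 1" using v True by (intro mult_mono) auto
        then show ?thesis by simp
      next
        case False
        then have "v * (q v - q 0) \<le> 0" using v by (simp add: mult_nonneg_nonpos)
        then show ?thesis by simp
      qed
      then have "(v * (q v - q 0)) / m \<le> 1 / m" using mpos by (intro divide_right_mono) auto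
      then show ?thesis by simp
    qed
    ultimately show ?thesis by simp
  qed
  show ?thesis
  proof (rule ccontr)
    assume "\<not> D v \<le> D 0"
    then have pos: "D v - D 0 > 0" by simp
    obtain m :: nat where m: "1 / (D v - D 0) < m" using reals_Archimedean2 by blast
    have "0 < 1 / (D v - D 0)" using pos by simp
    then have mp: "real m > 0" using m by linarith
    then have m1: "m \<ge> 1" by simp
    have "1 < real m * (D v - D 0)" using m pos by (simp add: field_simps)
    then have "1 / real m < D v - D 0" using mp by (simp add: field_simps)
    with step[OF m1] show False by simp
  qed
qed

lemma count_Q:
  fixes x :: real and n :: nat
  assumes n: "n \<ge> 1" and x: "0 \<le> x" "x \<le> 1"
  shows "(\<Sum>j=1..n. (if real j / n \<le> x then 1 else 0) / real n) \<le> x"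
    and "x - (\<Sum>j=1..n. (if real j / n \<le> x then 1 else 0) / real n) \<le> 1 / n"
proof -
  have npos: "real n > 0" using n by simp
  define K where "K = nat \<lfloor>real n * x\<rfloor>"
  have fl0: "0 \<le> \<lfloor>real n * x\<rfloor>" using x npos by simp
  have Kx: "real K \<le> real n * x" using fl0 by (simp add: K_def)
  have Kx2: "real n * x < real K + 1" using fl0 by (simp add: K_def)
  have set_eq: "{j\<in>{1..n}. real j / n \<le> x} = {1..K}"
  proof (intro set_eqI iffI)
    fix j assume j: "j \<in> {j\<in>{1..n}. real j / n \<le> x}"
    then have "real j \<le> real n * x" using npos by (simp add: field_simps)
    then have "int j \<le> \<lfloor>real n * x\<rfloor>" by (simp add: le_floor_iff)
    then show "j \<in> {1..K}" using j by (simp add: K_def)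
  next
    fix j assume j: "j \<in> {1..K}"
    then have "real j \<le> real K" by simp
    then have "real j \<le> real n * x" using Kx by linarith
    moreover have "real n * x \<le> real n * 1" using x npos by simp
    ultimately have "j \<le> n" by linarith
    moreover have "real j / n \<le> x" using \<open>real j \<le> real n * x\<close> npos by (simp add: field_simps)
    ultimately show "j \<in> {j\<in>{1..n}. real j / n \<le> x}" using j by simp
  qed
  have "(\<Sum>j=1..n. (if real j / n \<le> x then 1 else 0) / real n)
      = (\<Sum>j=1..n. if real j / n \<le> x then 1 / real n else 0)"
    by (intro sum.cong) auto
  also have "\<dots> = (\<Sum>j\<in>{j\<in>{1..n}. real j / n \<le> x}. 1 / real n)"
    by (rule sum.inter_filter[symmetric]) simp
  also have "\<dots> = real K / real n" using set_eq by simp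
  finally have eq: "(\<Sum>j=1..n. (if real j / n \<le> x then 1 else 0) / real n) = real K / real n" .
  show "(\<Sum>j=1..n. (if real j / n \<le> x then 1 else 0) / real n) \<le> x"
    unfolding eq using Kx npos by (simp add: field_simps)
  show "x - (\<Sum>j=1..n. (if real j / n \<le> x then 1 else 0) / real n) \<le> 1 / n"
  proof -
    have "x - real K / real n = (real n * x - real K) / real n" using npos by (simp add: field_simps)
    also have "\<dots> \<le> 1 / real n" using Kx2 npos by (intro divide_right_mono) auto
    finally show ?thesis unfolding eq .
  qed
qed

lemma one_dim:
  fixes q p h :: "real \<Rightarrow> real" and M :: real
  assumes qb: "\<forall>v\<in>{0..1}. 0 \<le> q v \<and> q v \<le> 1"
    and ic: "\<forall>v\<in>{0..1}. \<forall>w\<in>{0..1}. v * q w - p w \<le> v * q v - p v"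
    and ir: "\<forall>v\<in>{0..1}. 0 \<le> v * q v - p v"
    and hnn: "\<forall>v\<in>{0..1}. 0 \<le> h v"
    and hint: "set_integrable lborel {0..1} h"
    and phint: "set_integrable lborel {0..1} (\<lambda>v. p v * h v)"
    and Mb: "\<forall>r\<in>{0..1}. r * (LINT v:{r..1}|lborel. h v) \<le> M"
  shows "(LINT v:{0..1}|lborel. p v * h v) \<le> M"
proof -
  have mono: "q a \<le> q b" if "a \<in> {0..1}" "b \<in> {0..1}" "a \<le> b" for a b
  proof (cases "a = b")
    case False
    then have ab: "a < b" using that by simp
    have "a * q b - p b \<le> a * q a - p a" "b * q a - p a \<le> b * q b - p b" using ic that by auto
    then have "(b - a) * (q b - q a) \<ge> 0" by (simp add: algebra_simps)
    then show ?thesis using ab by (simp add: zero_le_mult_iff)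
  qed simp
  define H where "H = (LINT v:{0..1}|lborel. h v)"
  have H0: "0 \<le> H" unfolding H_def set_lebesgue_integral_def using hnn
    by (intro integral_nonneg_AE AE_I2) (auto simp: indicator_def)
  have M0: "0 \<le> M" using bspec[OF Mb, of 0] by simp
  define q' where "q' = (\<lambda>v. q (max 0 (min 1 v)))"
  have q'mono: "mono q'" unfolding mono_def q'_def by (auto intro!: mono)
  have q'meas: "q' \<in> borel_measurable borel" using borel_measurable_mono q'mono by blast
  have bound: "(LINT v:{0..1}|lborel. p v * h v) \<le> M + H / n" if n: "n \<ge> 1" for n :: nat
  proof -
    have npos: "real n > 0" using n by simp
    define ind where "ind = (\<lambda>j v. if real j / n \<le> q v then 1 else (0::real))"
    define S where "S = (\<lambda>j. {w\<in>{0..1}. real j / n \<le> q w})"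
    define R where "R = (\<lambda>j. Inf (S j))"
    define Q where "Q = (\<lambda>v. \<Sum>j=1..n. ind j v / n)"
    define phi where "phi = (\<lambda>v. \<Sum>j=1..n. R j * ind j v / n)"
    have bdd: "bdd_below (S j)" for j unfolding S_def by (rule bdd_belowI[of _ 0]) auto
    have Rprop: "0 \<le> R j \<and> (\<forall>w\<in>S j. R j \<le> w)" if "S j \<noteq> {}" for j
    proof
      show "0 \<le> R j" unfolding R_def using that by (intro cInf_greatest) (auto simp: S_def)
      show "\<forall>w\<in>S j. R j \<le> w" unfolding R_def using bdd by (auto intro: cInf_lower)
    qed
    have Rge: "a \<le> R j" if "a \<in> {0..1}" "b \<in> {0..1}" "a \<le> b" "ind j a = 0" "ind j b = 1" for a b j
    proof -
      have bS: "b \<in> S j" using that by (auto simp: S_def ind_def split: if_splits)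
      have "a \<le> w" if w: "w \<in> S j" for w
      proof (rule ccontr)
        assume "\<not> a \<le> w"
        then have "q w \<le> q a" using w \<open>a \<in> {0..1}\<close> by (intro mono) (auto simp: S_def)
        then show False using w \<open>ind j a = 0\<close> by (auto simp: S_def ind_def split: if_splits)
      qed
      then show ?thesis unfolding R_def using bS by (intro cInf_greatest) auto
    qed
    have Qb: "Q v \<le> q v \<and> q v - Q v \<le> 1 / n" if "v \<in> {0..1}" for v
      using count_Q[OF n, of "q v"] qb that unfolding Q_def ind_def by auto
    have phi_inc: "a * (Q b - Q a) \<le> phi b - phi a"
      if ab: "a \<in> {0..1}" "b \<in> {0..1}" "a \<le> b" for a b
    proof -
      have "a * (Q b - Q a) = (\<Sum>j=1..n. a * (ind j b - ind j a) / n)"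
        unfolding Q_def by (simp add: sum_distrib_left sum_subtractf[symmetric] diff_divide_distrib right_diff_distrib)
      also have "\<dots> \<le> (\<Sum>j=1..n. R j * (ind j b - ind j a) / n)"
      proof (rule sum_mono)
        fix j
        have "a * (ind j b - ind j a) \<le> R j * (ind j b - ind j a)"
        proof (cases "ind j a = 1")
          case True
          then have "real j / n \<le> q a" by (simp add: ind_def split: if_splits)
          then have "real j / n \<le> q b" using mono[OF ab] by linarith
          then show ?thesis using True by (simp add: ind_def)
        next
          case False
          then have a0: "ind j a = 0" by (simp add: ind_def split: if_splits)
          show ?thesis
          proof (cases "ind j b = 1")
            case True
            then show ?thesis using Rge[OF ab a0 True] a0 by simp
          next
            case False
            then have "ind j b = 0" by (simp add: ind_def split: if_splits)
            then show ?thesis using a0 by simp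
          qed
        qed
        then show "a * (ind j b - ind j a) / n \<le> R j * (ind j b - ind j a) / n"
          using npos by (intro divide_right_mono) auto
      qed
      also have "\<dots> = phi b - phi a"
        unfolding phi_def by (simp add: sum_subtractf[symmetric] diff_divide_distrib right_diff_distrib)
      finally show ?thesis .
    qed
    have phi0: "0 \<le> phi 0"
      unfolding phi_def
    proof (intro sum_nonneg)
      fix j
      show "0 \<le> R j * ind j 0 / n"
      proof (cases "ind j 0 = 1")
        case True
        then have "0 \<in> S j" by (auto simp: S_def ind_def split: if_splits)
        then have "0 \<le> R j" using Rprop by blast
        then show ?thesis using True npos by simp
      next
        case False
        then show ?thesis by (simp add: ind_def split: if_splits)
      qed
    qed
    define D where "D = (\<lambda>v. p v - phi v - v * (q v - Q v))"
    have Dinc: "\<forall>a\<in>{0..1}. \<forall>b\<in>{0..1}. a \<le> b \<longrightarrow> D b - D a \<le> (b - a) * (q b - q a)"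
    proof (intro ballI impI)
      fix a b :: real assume ab: "a \<in> {0..1}" "b \<in> {0..1}" "a \<le> b"
      have e1: "b * q a - p a \<le> b * q b - p b" using ic ab by auto
      have e2: "a * Q b - a * Q a \<le> phi b - phi a" using phi_inc[OF ab] by (simp add: right_diff_distrib)
      have "(b - a) * Q b \<le> (b - a) * q b" using Qb[of b] ab by (intro mult_left_mono) auto
      then have e3: "b * Q b - a * Q b \<le> b * q b - a * q b" by (simp add: left_diff_distrib)
      have e4: "(b - a) * (q b - q a) = b * q b - b * q a - a * q b + a * q a" by (simp add: algebra_simps)
      have e5: "D b - D a = p b - phi b - b * q b + b * Q b - p a + phi a + a * q a - a * Q a"
        by (simp add: D_def algebra_simps)
      show "D b - D a \<le> (b - a) * (q b - q a)" unfolding e4 e5 using e1 e2 e3 by linarith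
    qed
    have "0 \<le> 0 * q 0 - p 0" using bspec[OF ir, of 0] by simp
    then have D0: "D 0 \<le> 0" using phi0 by (simp add: D_def)
    have pw: "p v \<le> phi v + 1 / n" if v: "v \<in> {0..1}" for v
    proof -
      have "D v \<le> 0" using chain[OF qb Dinc v] D0 by simp
      moreover have "v * (q v - Q v) \<le> 1 * (1 / n)" using Qb[OF v] v by (intro mult_mono) auto
      ultimately show ?thesis by (simp add: D_def)
    qed
    have indint: "set_integrable lborel {0..1} (\<lambda>v. ind j v * h v)" for j
    proof -
      define A where "A = {x. real j / n \<le> q' x}"
      have A: "A \<in> sets lborel" unfolding A_def using q'meas by measurable
      have "integrable lborel (\<lambda>v. indicator A v *\<^sub>R (indicator {0..1} v *\<^sub>R h v))"
        by (rule integrable_mult_indicator[OF A hint[unfolded set_integrable_def]])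
      moreover have "(\<lambda>v. indicator A v *\<^sub>R (indicator {0..1} v *\<^sub>R h v)) = (\<lambda>v. indicator {0..1} v *\<^sub>R (ind j v * h v))"
        by (auto simp: A_def q'_def ind_def indicator_def fun_eq_iff)
      ultimately show ?thesis unfolding set_integrable_def by simp
    qed
    have Ij: "R j / n * (LINT v:{0..1}|lborel. ind j v * h v) \<le> M / n" if j: "j \<in> {1..n}" for j
    proof (cases "S j = {}")
      case True
      have "(\<lambda>v. indicator {0..1} v *\<^sub>R (ind j v * h v)) = (\<lambda>v. 0)"
        using True by (auto simp: S_def ind_def indicator_def fun_eq_iff)
      then have "(LINT v:{0..1}|lborel. ind j v * h v) = 0" unfolding set_lebesgue_integral_def by simp
      then show ?thesis using M0 npos by simp
    next
      case False
      from Rprop[OF False] have R0: "0 \<le> R j" and Rw: "\<forall>w\<in>S j. R j \<le> w" by auto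
      obtain w where w: "w \<in> S j" using False by auto
      have R1: "R j \<le> 1" using Rw w by (auto simp: S_def)
      have sub: "{R j..1} \<subseteq> {0..1}" using R0 by auto
      have Tint: "set_integrable lborel {R j..1} h"
        by (rule set_integrable_subset[OF hint _ sub]) simp
      have "(LINT v:{0..1}|lborel. ind j v * h v) \<le> (LINT v:{R j..1}|lborel. h v)"
        unfolding set_lebesgue_integral_def
      proof (rule integral_mono)
        show "integrable lborel (\<lambda>v. indicator {0..1} v *\<^sub>R (ind j v * h v))"
          using indint unfolding set_integrable_def .
        show "integrable lborel (\<lambda>v. indicator {R j..1} v *\<^sub>R h v)"
          using Tint unfolding set_integrable_def .
        fix v
        show "indicator {0..1} v *\<^sub>R (ind j v * h v) \<le> indicator {R j..1} v *\<^sub>R h v"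
        proof (cases "v \<in> {0..1} \<and> ind j v = 1")
          case True
          then have "v \<in> S j" by (auto simp: S_def ind_def split: if_splits)
          then have "R j \<le> v" using Rw by auto
          then show ?thesis using True by (auto simp: indicator_def)
        next
          case False
          have "0 \<le> indicator {R j..1} v *\<^sub>R h v"
            using hnn sub by (auto simp: indicator_def)
          moreover have "indicator {0..1} v *\<^sub>R (ind j v * h v) = 0"
            using False by (auto simp: indicator_def ind_def)
          ultimately show ?thesis by (metis real_scaleR_def)
        qed
      qed
      then have "R j * (LINT v:{0..1}|lborel. ind j v * h v) \<le> R j * (LINT v:{R j..1}|lborel. h v)"
        using R0 by (intro mult_left_mono) auto
      also have "\<dots> \<le> M" using Mb R0 R1 by auto
      finally show ?thesis using npos by (simp add: divide_right_mono)
    qed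
    have phiint: "set_integrable lborel {0..1} (\<lambda>v. (phi v + 1 / n) * h v)"
    proof -
      have "integrable lborel (\<lambda>v. (\<Sum>j=1..n. R j / n * (indicator {0..1} v *\<^sub>R (ind j v * h v))) + 1 / n * (indicator {0..1} v *\<^sub>R h v))"
        using indint hint unfolding set_integrable_def by (intro Bochner_Integration.integrable_add Bochner_Integration.integrable_sum Bochner_Integration.integrable_mult_right) auto
      moreover have "(\<lambda>v. (\<Sum>j=1..n. R j / n * (indicator {0..1} v *\<^sub>R (ind j v * h v))) + 1 / n * (indicator {0..1} v *\<^sub>R h v))
          = (\<lambda>v. indicator {0..1} v *\<^sub>R ((phi v + 1 / n) * h v))"
        by (simp add: fun_eq_iff phi_def sum_distrib_left sum_distrib_right algebra_simps)
      ultimately show ?thesis unfolding set_integrable_def by simp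
    qed
    have "(LINT v:{0..1}|lborel. p v * h v) \<le> (LINT v:{0..1}|lborel. (phi v + 1 / n) * h v)"
      using phint phiint pw hnn by (intro set_integral_mono) (auto intro: mult_right_mono)
    also have "(LINT v:{0..1}|lborel. (phi v + 1 / n) * h v)
        = (\<Sum>j=1..n. R j / n * (LINT v:{0..1}|lborel. ind j v * h v)) + 1 / n * H"
    proof -
      have "(\<lambda>v. indicator {0..1} v *\<^sub>R ((phi v + 1 / n) * h v))
          = (\<lambda>v. (\<Sum>j=1..n. R j / n * (indicator {0..1} v *\<^sub>R (ind j v * h v))) + 1 / n * (indicator {0..1} v *\<^sub>R h v))"
        by (simp add: fun_eq_iff phi_def sum_distrib_left sum_distrib_right algebra_simps)
      then show ?thesis
        using indint hint unfolding set_lebesgue_integral_def set_integrable_def H_def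
        by (simp add: Bochner_Integration.integral_add Bochner_Integration.integrable_sum Bochner_Integration.integral_sum Bochner_Integration.integrable_mult_right)
    qed
    also have "\<dots> \<le> (\<Sum>j=1..n. M / n) + 1 / n * H"
      using Ij by (intro add_right_mono sum_mono) auto
    also have "\<dots> = M + H / n" using npos by simp
    finally show ?thesis .
  qed
  show ?thesis
  proof (rule ccontr)
    define L where "L = (LINT v:{0..1}|lborel. p v * h v)"
    assume "\<not> ?thesis"
    then have pos: "L - M > 0" by (simp add: L_def)
    obtain m :: nat where m: "H / (L - M) < m" using reals_Archimedean2 by blast
    have "0 \<le> H / (L - M)" using H0 pos by simp
    then have mp: "real m > 0" using m by linarith
    then have m1: "m \<ge> 1" by simp
    have "H < real m * (L - M)" using m pos by (simp add: field_simps)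
    then have "H / real m < L - M" using mp by (simp add: field_simps)
    with bound[OF m1] show False by (simp add: L_def)
  qed
qed

lemma fub:
  fixes G :: "real \<times> real \<Rightarrow> real"
  assumes "integrable lborel G"
  shows "integral\<^sup>L lborel G = (\<integral>k. (\<integral>v. G (v,k) \<partial>lborel) \<partial>lborel)"
    and "AE k in lborel. integrable lborel (\<lambda>v. G (v,k))"
    and "integrable lborel (\<lambda>k. \<integral>v. G (v,k) \<partial>lborel)"
proof -
  have i: "integrable (lborel \<Otimes>\<^sub>M lborel) (case_prod (\<lambda>x y. G (x,y)))"
    using assms by (simp add: lborel_prod)
  show "integral\<^sup>L lborel G = (\<integral>k. (\<integral>v. G (v,k) \<partial>lborel) \<partial>lborel)"
    using lborel_pair.integral_snd[OF i] by (simp add: lborel_prod)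
  show "AE k in lborel. integrable lborel (\<lambda>v. G (v,k))"
    using lborel_pair.AE_integrable_snd[OF i] by simp
  show "integrable lborel (\<lambda>k. \<integral>v. G (v,k) \<partial>lborel)"
    using lborel_pair.integrable_snd[OF i] by simp
qed

lemma ind_types: "indicator types (v,k) = (indicator {0..1} v * indicator {0<..1} k :: real)"
  by (simp add: types_def indicator_def)

theorem proposition4:
  fixes g :: "real \<times> real \<Rightarrow> real" and pstar :: real
  assumes g_meas: "g \<in> borel_measurable lborel"
    and g_pos: "\<forall>x\<in>types. g x > 0"
    and g_int: "set_integrable lborel types g"
    and g_one: "(LINT x:types|lborel. g x) = 1"
    and g_prod: "\<forall>(v,k)\<in>types. g (v,k) = marg_v g v * marg_k g k"
    and pstar_in: "pstar \<in> {0..1}"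
    and pstar_max: "\<forall>q\<in>{0..1}. q * (1 - cdf_v g q) \<le> pstar * (1 - cdf_v g pstar)"
  shows "feasible (\<lambda>(v,k). if v \<ge> pstar then (k, 1) else (0, 0))
    \<and> IC (\<lambda>(v,k). if v \<ge> pstar then (k, 1) else (0, 0)) (\<lambda>(v,k). if v \<ge> pstar then pstar else 0)
    \<and> IR (\<lambda>(v,k). if v \<ge> pstar then (k, 1) else (0, 0)) (\<lambda>(v,k). if v \<ge> pstar then pstar else 0)
    \<and> (\<forall>f p. feasible f \<and> IC f p \<and> IR f p \<and> set_integrable lborel types (\<lambda>x. p x * g x)
          \<longrightarrow> revenue g p \<le> revenue g (\<lambda>(v,k). if v \<ge> pstar then pstar else 0))"
proof -
  define mv where "mv = marg_v g"
  define mk where "mk = marg_k g"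
  define T where "T = (\<lambda>r. LINT v:{r..1}|lborel. mv v)"
  define M where "M = pstar * T pstar"
  have gprod: "g (v,k) = mv v * mk k" if "v \<in> {0..1}" "k \<in> {0<..1}" for v k
    using g_prod that by (auto simp: types_def mv_def mk_def)
  have gpos: "0 < g (v,k)" if "v \<in> {0..1}" "k \<in> {0<..1}" for v k
    using g_pos that by (auto simp: types_def)
  have mv_nn: "0 \<le> mv v" if "v \<in> {0..1}" for v
    unfolding mv_def marg_v_def set_lebesgue_integral_def using gpos that
    by (intro integral_nonneg_AE AE_I2) (auto simp: indicator_def less_imp_le)
  have mk_nn: "0 \<le> mk k" if "k \<in> {0<..1}" for k
    unfolding mk_def marg_k_def set_lebesgue_integral_def using gpos that
    by (intro integral_nonneg_AE AE_I2) (auto simp: indicator_def less_imp_le)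
  have both_pos: "0 < mv v \<and> 0 < mk k" if "v \<in> {0..1}" "k \<in> {0<..1}" for v k
  proof -
    have "0 < mv v * mk k" using gpos[OF that] gprod[OF that] by simp
    then show ?thesis using mv_nn[OF that(1)] mk_nn[OF that(2)]
      by (auto simp: zero_less_mult_iff)
  qed
  have mv1: "(LINT v:{0..1}|lborel. mv v) = 1"
  proof -
    have "mk 1 = (LINT v:{0..1}|lborel. g (v,1))" by (simp add: mk_def marg_k_def)
    also have "\<dots> = (LINT v:{0..1}|lborel. mv v * mk 1)"
      by (intro set_lebesgue_integral_cong) (auto simp: gprod)
    also have "\<dots> = (LINT v:{0..1}|lborel. mv v) * mk 1" by simp
    finally show ?thesis using both_pos[of 0 1] by simp
  qed
  have mk1: "(LINT k:{0<..1}|lborel. mk k) = 1"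
  proof -
    have "mv 0 = (LINT k:{0<..1}|lborel. g (0,k))" by (simp add: mv_def marg_v_def)
    also have "\<dots> = (LINT k:{0<..1}|lborel. mv 0 * mk k)"
      by (intro set_lebesgue_integral_cong) (auto simp: gprod)
    also have "\<dots> = mv 0 * (LINT k:{0<..1}|lborel. mk k)" by simp
    finally show ?thesis using both_pos[of 0 1] by simp
  qed
  have mv_si: "set_integrable lborel {0..1} mv"
    using mv1 not_integrable_integral_eq unfolding set_integrable_def set_lebesgue_integral_def by fastforce
  have mk_si: "set_integrable lborel {0<..1} mk"
    using mk1 not_integrable_integral_eq unfolding set_integrable_def set_lebesgue_integral_def by fastforce
  have T_eq: "T r = 1 - cdf_v g r" if r: "r \<in> {0..1}" for r
  proof -
    have un: "{0..1} = {0..r} \<union> {r<..1}" using r by auto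
    have s1: "set_integrable lborel {0..r} mv" by (rule set_integrable_subset[OF mv_si]) (use r in auto)
    have s2: "set_integrable lborel {r<..1} mv" by (rule set_integrable_subset[OF mv_si]) (use r in auto)
    have s3: "set_integrable lborel {r..1} mv" by (rule set_integrable_subset[OF mv_si]) (use r in auto)
    have "1 = (LINT v:{0..r}|lborel. mv v) + (LINT v:{r<..1}|lborel. mv v)"
    proof -
      have "{0..r} \<inter> {r<..1} = {}" by auto
      from set_integral_Un[OF this s1 s2] show ?thesis using mv1 un by simp
    qed
    moreover have "(LINT v:{r<..1}|lborel. mv v) = T r"
      unfolding T_def
    proof (rule set_integral_cong_set)
      show "set_borel_measurable lborel {r..1} mv" using s3 unfolding set_integrable_def set_borel_measurable_def
        by (rule borel_measurable_integrable)
      show "set_borel_measurable lborel {r<..1} mv" using s2 unfolding set_integrable_def set_borel_measurable_def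
        by (rule borel_measurable_integrable)
      show "AE x in lborel. (x \<in> {r..1}) = (x \<in> {r<..1})"
        using AE_lborel_singleton[of r] by eventually_elim auto
    qed
    ultimately show ?thesis by (simp add: cdf_v_def mv_def)
  qed
  have Mb: "\<forall>r\<in>{0..1}. r * T r \<le> M"
    using pstar_max T_eq pstar_in by (auto simp: M_def)
  have part1: "feasible (\<lambda>(v,k). if v \<ge> pstar then (k, 1) else (0, 0))"
    by (auto simp: feasible_def types_def)
  have part2: "IC (\<lambda>(v,k). if v \<ge> pstar then (k, 1) else (0, 0)) (\<lambda>(v,k). if v \<ge> pstar then pstar else 0)"
    unfolding IC_def
  proof (intro ballI, clarify)
    fix v k v' k' assume t: "(v,k) \<in> types" "(v',k') \<in> types"
    then have v: "0 \<le> v" "v \<le> 1" and k: "0 < k" by (auto simp: types_def)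
    have mn: "v * min (k' / k) 1 \<le> v" using v by (simp add: mult_left_le)
    show "util v k (fst (if pstar \<le> v' then (k', 1) else (0, 0))) (snd (if pstar \<le> v' then (k', 1) else (0, 0)))
           (if pstar \<le> v' then pstar else 0)
          \<le> util v k (fst (if pstar \<le> v then (k, 1) else (0, 0))) (snd (if pstar \<le> v then (k, 1) else (0, 0)))
           (if pstar \<le> v then pstar else 0)"
      using mn k by (auto simp: util_def)
  qed
  have part3: "IR (\<lambda>(v,k). if v \<ge> pstar then (k, 1) else (0, 0)) (\<lambda>(v,k). if v \<ge> pstar then pstar else 0)"
    by (auto simp: IR_def types_def util_def)
  have rev_post: "revenue g (\<lambda>(v,k). if v \<ge> pstar then pstar else 0) = M"
  proof -
    define G where "G = (\<lambda>x. indicator types x *\<^sub>R ((\<lambda>(v,k). if v \<ge> pstar then pstar else 0) x * g x))"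
    have Geq: "G = (\<lambda>x. pstar * (indicator ({pstar..} \<times> UNIV) x *\<^sub>R (indicator types x *\<^sub>R g x)))"
      by (auto simp: G_def fun_eq_iff indicator_def)
    have Gint: "integrable lborel G"
    proof -
      have "{pstar..} \<times> (UNIV::real set) \<in> sets (lborel \<Otimes>\<^sub>M lborel)" by (rule pair_measureI) auto
      then have A: "{pstar..} \<times> (UNIV::real set) \<in> sets lborel" by (simp only: lborel_prod)
      show ?thesis unfolding Geq
        by (rule Bochner_Integration.integrable_mult_right,
            rule integrable_mult_indicator[OF A g_int[unfolded set_integrable_def]])
    qed
    have inner: "(\<integral>v. G (v,k) \<partial>lborel) = indicator {0<..1} k * mk k * M" for k
    proof (cases "k \<in> {0<..1}")
      case True
      have "(\<integral>v. G (v,k) \<partial>lborel) = (\<integral>v. indicator {pstar..1} v * mv v * (pstar * mk k) \<partial>lborel)"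
        using True pstar_in by (intro Bochner_Integration.integral_cong refl)
          (auto simp: G_def indicator_def types_def gprod)
      also have "\<dots> = T pstar * (pstar * mk k)"
        by (simp add: T_def set_lebesgue_integral_def)
      finally show ?thesis using True by (simp add: M_def)
    next
      case False
      then have "(\<lambda>v. G (v,k)) = (\<lambda>v. 0)" by (auto simp: G_def fun_eq_iff indicator_def types_def)
      then show ?thesis using False by simp
    qed
    have "revenue g (\<lambda>(v,k). if v \<ge> pstar then pstar else 0) = integral\<^sup>L lborel G"
      by (simp add: revenue_def set_lebesgue_integral_def G_def)
    also have "\<dots> = (\<integral>k. indicator {0<..1} k * mk k * M \<partial>lborel)"
      using fub(1)[OF Gint] inner by simp
    also have "\<dots> = (LINT k:{0<..1}|lborel. mk k) * M"
      by (simp add: set_lebesgue_integral_def)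
    finally show ?thesis using mk1 by simp
  qed
  have part4: "revenue g p \<le> M"
    if fp: "feasible f" "IC f p" "IR f p" "set_integrable lborel types (\<lambda>x. p x * g x)" for f p
  proof -
    define G where "G = (\<lambda>x. indicator types x *\<^sub>R (p x * g x))"
    have Gint: "integrable lborel G" using fp(4) unfolding G_def set_integrable_def .
    have inner: "(\<integral>v. G (v,k) \<partial>lborel) \<le> indicator {0<..1} k * mk k * M"
      if Gk: "integrable lborel (\<lambda>v. G (v,k))" for k
    proof (cases "k \<in> {0<..1}")
      case False
      then have "(\<lambda>v. G (v,k)) = (\<lambda>v. 0)" by (auto simp: G_def fun_eq_iff indicator_def types_def)
      then show ?thesis using False by simp
    next
      case True
      have mkp: "0 < mk k" using both_pos[of 0 k] True by simp
      define q where "q = (\<lambda>v. min (fst (f (v,k)) / k) (snd (f (v,k))))"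
      define pp where "pp = (\<lambda>v. p (v,k))"
      have Geq: "(\<lambda>v. G (v,k)) = (\<lambda>v. indicator {0..1} v *\<^sub>R (mk k * (pp v * mv v)))"
        using True by (auto simp: G_def fun_eq_iff indicator_def types_def gprod pp_def)
      have psi: "set_integrable lborel {0..1} (\<lambda>v. pp v * mv v)"
      proof -
        have "set_integrable lborel {0..1} (\<lambda>v. mk k * (pp v * mv v))"
          using Gk Geq unfolding set_integrable_def by simp
        then show ?thesis using mkp by simp
      qed
      have kk: "0 < k" "k \<le> 1" using True by auto
      have qb: "\<forall>v\<in>{0..1}. 0 \<le> q v \<and> q v \<le> 1"
      proof
        fix v :: real assume v: "v \<in> {0..1}"
        have "(v,k) \<in> types" using v True by (simp add: types_def)
        then have "f (v,k) \<in> {0..1} \<times> {0..1}" using fp(1) unfolding feasible_def by blast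
        then have a: "0 \<le> fst (f (v,k))" "0 \<le> snd (f (v,k))" "snd (f (v,k)) \<le> 1"
          by (auto simp: mem_Times_iff)
        have "0 \<le> fst (f (v,k)) / k" using a kk by simp
        then show "0 \<le> q v \<and> q v \<le> 1" using a unfolding q_def by (simp add: min_le_iff_disj)
      qed
      have ic: "\<forall>v\<in>{0..1}. \<forall>w\<in>{0..1}. v * q w - pp w \<le> v * q v - pp v"
      proof (intro ballI)
        fix v w :: real assume v: "v \<in> {0..1}" and w: "w \<in> {0..1}"
        have t: "(v,k) \<in> types" "(w,k) \<in> types" using v w True by (auto simp: types_def)
        have "util v k (fst (f (w,k))) (snd (f (w,k))) (p (w,k)) \<le> util v k (fst (f (v,k))) (snd (f (v,k))) (p (v,k))"
          using fp(2) t unfolding IC_def by fast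
        then show "v * q w - pp w \<le> v * q v - pp v" by (simp add: util_def q_def pp_def)
      qed
      have ir: "\<forall>v\<in>{0..1}. 0 \<le> v * q v - pp v"
      proof
        fix v :: real assume v: "v \<in> {0..1}"
        have t: "(v,k) \<in> types" using v True by (auto simp: types_def)
        have "0 \<le> util v k (fst (f (v,k))) (snd (f (v,k))) (p (v,k))"
          using fp(3) t unfolding IR_def by fast
        then show "0 \<le> v * q v - pp v" by (simp add: util_def q_def pp_def)
      qed
      have "(LINT v:{0..1}|lborel. pp v * mv v) \<le> M"
        using one_dim[OF qb ic ir _ mv_si psi] mv_nn Mb unfolding T_def by auto
      then have "mk k * (LINT v:{0..1}|lborel. pp v * mv v) \<le> mk k * M"
        using mkp by (intro mult_left_mono) auto
      moreover have "(\<integral>v. G (v,k) \<partial>lborel) = mk k * (LINT v:{0..1}|lborel. pp v * mv v)"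
      proof -
        have "(\<integral>v. G (v,k) \<partial>lborel) = (LINT v:{0..1}|lborel. mk k * (pp v * mv v))"
          unfolding Geq set_lebesgue_integral_def ..
        then show ?thesis by (simp only: set_integral_mult_right)
      qed
      ultimately show ?thesis using True by simp
    qed
    have "revenue g p = integral\<^sup>L lborel G"
      by (simp add: revenue_def set_lebesgue_integral_def G_def)
    also have "\<dots> = (\<integral>k. (\<integral>v. G (v,k) \<partial>lborel) \<partial>lborel)" by (rule fub(1)[OF Gint])
    also have "\<dots> \<le> (\<integral>k. indicator {0<..1} k * mk k * M \<partial>lborel)"
    proof (rule integral_mono_AE)
      show "integrable lborel (\<lambda>k. \<integral>v. G (v,k) \<partial>lborel)" by (rule fub(3)[OF Gint])
      show "integrable lborel (\<lambda>k. indicator {0<..1} k * mk k * M)"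
        using mk_si unfolding set_integrable_def
        by (intro Bochner_Integration.integrable_mult_left) simp
      show "AE k in lborel. (\<integral>v. G (v,k) \<partial>lborel) \<le> indicator {0<..1} k * mk k * M"
        using fub(2)[OF Gint] by eventually_elim (rule inner)
    qed
    also have "\<dots> = (LINT k:{0<..1}|lborel. mk k) * M"
      by (simp add: set_lebesgue_integral_def)
    finally show ?thesis using mk1 by simp
  qed
  show ?thesis using part1 part2 part3 part4 rev_post by auto
qed

end
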